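(* For every graph $G=(V,E)$, $\rho_T(G)=\widehat{\Theta}(G)$.
   Context: Graphs are finite and simple. A graph $G=(V,E)$ is a threshold graph if there exist weights $w:V\to\mathbb{R}$ and a real number $s$ such that for all distinct $i,j\in V$: $w(i)+w(j)\ge s$ iff $ij\in E$. The threshold graph intersection number $\widehat{\Theta}(G)$ is the least $k\ge 1$ such that there exist threshold graphs $(V,E_1),\dots,(V,E_k)$ on the same vertex set with $E_1\cap\dots\cap E_k=E$. For $u,v\in(\mathbb{R}\cup\{\infty\})^k$ the min-plus tropical dot product is $u\odot v=\min_i(u_i+v_i)$. A min-plus $k$-tropical dot product representation of $G$ is a map $f:V\to(\mathbb{R}\cup\{\infty\})^k$ with a threshold $t>0$ such that for all distinct $x,y\in V$: $xy\in E$ iff $f(x)\odot f(y)\ge t$. $\rho_T(G)$ is the least $k\ge 1$ for which such a representation exists. *)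

theory Defs
  imports "HOL-Library.Extended_Real"
begin

definition simple_graph :: "'a set \<Rightarrow> 'a set set \<Rightarrow> bool" where
  "simple_graph V E \<longleftrightarrow> finite V \<and>
     (\<forall>e\<in>E. \<exists>x y. x \<in> V \<and> y \<in> V \<and> x \<noteq> y \<and> e = {x, y})"

definition threshold_graph :: "'a set \<Rightarrow> 'a set set \<Rightarrow> bool" where
  "threshold_graph V E \<longleftrightarrow> simple_graph V E \<and>
     (\<exists>(w::'a \<Rightarrow> real) (s::real). \<forall>i\<in>V. \<forall>j\<in>V. i \<noteq> j \<longrightarrow>
        (w i + w j \<ge> s \<longleftrightarrow> {i, j} \<in> E))"

definition threshold_intersection_number :: "'a set \<Rightarrow> 'a set set \<Rightarrow> nat" where
  "threshold_intersection_number V E = (LEAST k. k \<ge> 1 \<and>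
     (\<exists>Es :: nat \<Rightarrow> 'a set set. (\<forall>i<k. threshold_graph V (Es i)) \<and>
        (\<Inter>i<k. Es i) = E))"

text \<open>Min-plus tropical dot product of the first k coordinates of vectors in
  (R \<union> {\<infinity>})^k, represented as functions nat \<Rightarrow> ereal (coordinates 0..k-1).\<close>
definition trop_dot :: "nat \<Rightarrow> (nat \<Rightarrow> ereal) \<Rightarrow> (nat \<Rightarrow> ereal) \<Rightarrow> ereal" where
  "trop_dot k u v = Min ((\<lambda>i. u i + v i) ` {..<k})"

definition trop_rep :: "nat \<Rightarrow> 'a set \<Rightarrow> 'a set set \<Rightarrow> ('a \<Rightarrow> nat \<Rightarrow> ereal) \<Rightarrow> real \<Rightarrow> bool" where
  "trop_rep k V E f t \<longleftrightarrow> t > 0 \<and>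
     (\<forall>x\<in>V. \<forall>i<k. f x i \<noteq> -\<infinity>) \<and>
     (\<forall>x\<in>V. \<forall>y\<in>V. x \<noteq> y \<longrightarrow> ({x, y} \<in> E \<longleftrightarrow> trop_dot k (f x) (f y) \<ge> ereal t))"

definition rho_T :: "'a set \<Rightarrow> 'a set set \<Rightarrow> nat" where
  "rho_T V E = (LEAST k. k \<ge> 1 \<and> (\<exists>f t. trop_rep k V E f t))"

end

theory Submission
  imports Defs
begin

lemma trop_dot_ge:
  assumes "k \<ge> 1"
  shows "(trop_dot k u v \<ge> c) \<longleftrightarrow> (\<forall>i<k. u i + v i \<ge> c)"
proof -
  have "0 \<in> {..<k}" using assms by simp
  then have "{..<k} \<noteq> {}" by blast
  then show ?thesis unfolding trop_dot_def by (auto simp add: Min_ge_iff)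
qed

lemma pair_mem:
  assumes sym: "\<And>x y. P x y \<longleftrightarrow> P y x"
  shows "{i, j} \<in> {{x, y} | x y. P x y} \<longleftrightarrow> P i j"
proof
  assume "{i, j} \<in> {{x, y} | x y. P x y}"
  then obtain x y where "{i,j} = {x,y}" "P x y" by auto
  then show "P i j" using sym by (auto simp: doubleton_eq_iff)
qed auto

lemma dir1:
  assumes G: "simple_graph V E" and k: "k \<ge> 1" and R: "trop_rep k V E f t"
  shows "\<exists>Es. (\<forall>i<k. threshold_graph V (Es i)) \<and> (\<Inter>i<k. Es i) = E"
proof -
  have fin: "finite V" using G by (simp add: simple_graph_def)
  have tpos: "t > 0" and ninf: "\<And>x i. x \<in> V \<Longrightarrow> i < k \<Longrightarrow> f x i \<noteq> -\<infinity>"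
    and rep: "\<And>x y. x\<in>V \<Longrightarrow> y\<in>V \<Longrightarrow> x \<noteq> y \<Longrightarrow> ({x, y} \<in> E \<longleftrightarrow> trop_dot k (f x) (f y) \<ge> ereal t)"
    using R by (auto simp: trop_rep_def)
  define Es where "Es i = {{x,y} | x y. x\<in>V \<and> y\<in>V \<and> x\<noteq>y \<and> f x i + f y i \<ge> ereal t}" for i
  have memEs: "{x,y} \<in> Es i \<longleftrightarrow> f x i + f y i \<ge> ereal t"
    if "x\<in>V" "y\<in>V" "x\<noteq>y" for x y i
  proof -
    have "{x,y} \<in> Es i \<longleftrightarrow> (x\<in>V \<and> y\<in>V \<and> x\<noteq>y \<and> f x i + f y i \<ge> ereal t)"
      unfolding Es_def
      by (rule pair_mem) (auto simp: add.commute)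
    then show ?thesis using that by auto
  qed
  have thr: "threshold_graph V (Es i)" if ik: "i<k" for i
  proof -
    define M where "M = t + (\<Sum>x\<in>V. \<bar>real_of_ereal (f x i)\<bar>)"
    define w where "w x = (if f x i = \<infinity> then M else real_of_ereal (f x i))" for x
    have Mge: "M \<ge> t + \<bar>real_of_ereal (f x i)\<bar>" if "x \<in> V" for x
    proof -
      have "\<bar>real_of_ereal (f x i)\<bar> \<le> (\<Sum>x\<in>V. \<bar>real_of_ereal (f x i)\<bar>)"
        by (rule member_le_sum[OF that _ fin]) (rule abs_ge_zero)
      then show ?thesis unfolding M_def by linarith
    qed
    have "0 \<le> (\<Sum>x\<in>V. \<bar>real_of_ereal (f x i)\<bar>)" by (rule sum_nonneg) (rule abs_ge_zero)
    then have Mt: "M \<ge> t" unfolding M_def by linarith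
    have fe: "f x i = ereal (w x)" if "x \<in> V" "f x i \<noteq> \<infinity>" for x
      using that ninf[OF _ ik] unfolding w_def by (cases "f x i") auto
    have key: "w x + w y \<ge> t \<longleftrightarrow> f x i + f y i \<ge> ereal t" if "x\<in>V" "y\<in>V" for x y
    proof (cases "f x i = \<infinity>")
      case True
      note a = True
      show ?thesis
      proof (cases "f y i = \<infinity>")
        case True then show ?thesis using a Mt tpos by (simp add: w_def)
      next
        case False
        have "w y = real_of_ereal (f y i)" using False by (simp add: w_def)
        moreover have "M \<ge> t + \<bar>real_of_ereal (f y i)\<bar>" using Mge that by auto
        moreover have "f y i \<noteq> -\<infinity>" using ninf that ik by auto
        moreover have "- real_of_ereal (f y i) \<le> \<bar>real_of_ereal (f y i)\<bar>" by (rule abs_ge_minus_self)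
        ultimately show ?thesis using a by (simp add: w_def)
      qed
    next
      case False
      note a = False
      show ?thesis
      proof (cases "f y i = \<infinity>")
        case True
        have "w x = real_of_ereal (f x i)" using a by (simp add: w_def)
        moreover have "M \<ge> t + \<bar>real_of_ereal (f x i)\<bar>" using Mge that by auto
        moreover have "f x i \<noteq> -\<infinity>" using ninf that ik by auto
        moreover have "- real_of_ereal (f x i) \<le> \<bar>real_of_ereal (f x i)\<bar>" by (rule abs_ge_minus_self)
        ultimately show ?thesis using True by (simp add: w_def)
      next
        case False
        then have "f x i = ereal (w x)" "f y i = ereal (w y)" using a fe that by auto
        then show ?thesis by simp
      qed
    qed
    have sg: "simple_graph V (Es i)" using fin unfolding simple_graph_def Es_def by blast
    show ?thesis unfolding threshold_graph_def
      using sg key memEs by (intro conjI exI[of _ w] exI[of _ t]) auto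
  qed
  have "(\<Inter>i<k. Es i) = E"
  proof
    show "(\<Inter>i<k. Es i) \<subseteq> E"
    proof
      fix e assume e: "e \<in> (\<Inter>i<k. Es i)"
      then have "e \<in> Es 0" using k by auto
      then obtain x y where xy: "e = {x,y}" "x\<in>V" "y\<in>V" "x\<noteq>y" unfolding Es_def by auto
      have "\<forall>i<k. f x i + f y i \<ge> ereal t" using e xy memEs by auto
      then show "e \<in> E" using rep xy trop_dot_ge[OF k] by auto
    qed
  next
    show "E \<subseteq> (\<Inter>i<k. Es i)"
    proof
      fix e assume e: "e \<in> E"
      then obtain x y where xy: "e = {x,y}" "x\<in>V" "y\<in>V" "x\<noteq>y"
        using G unfolding simple_graph_def by blast
      have "\<forall>i<k. f x i + f y i \<ge> ereal t" using e xy rep trop_dot_ge[OF k] by auto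
      then show "e \<in> (\<Inter>i<k. Es i)" using xy memEs by auto
    qed
  qed
  then show ?thesis using thr by blast
qed

lemma dir2:
  assumes G: "simple_graph V E" and k: "k \<ge> 1"
    and T: "\<forall>i<k. threshold_graph V (Es i)" and I: "(\<Inter>i<k. Es i) = E"
  shows "\<exists>f t. trop_rep k V E f t"
proof -
  have "\<forall>i. \<exists>w s. i < k \<longrightarrow> (\<forall>a\<in>V. \<forall>b\<in>V. a \<noteq> b \<longrightarrow>
        (w a + w b \<ge> (s::real) \<longleftrightarrow> {a, b} \<in> Es i))"
    using T unfolding threshold_graph_def by blast
  then obtain W S where WS: "\<And>i a b. i < k \<Longrightarrow> a\<in>V \<Longrightarrow> b\<in>V \<Longrightarrow> a \<noteq> b \<Longrightarrow>
        (W i a + W i b \<ge> (S i::real) \<longleftrightarrow> {a, b} \<in> Es i)"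
    by metis
  define f where "f x i = ereal (W i x - S i / 2 + 1 / 2)" for x i
  have c: "f x i + f y i \<ge> ereal 1 \<longleftrightarrow> W i x + W i y \<ge> S i" for x y i
    unfolding f_def by simp (auto)
  have "trop_rep k V E f 1"
    unfolding trop_rep_def
  proof (intro conjI ballI allI impI)
    fix x y assume xy: "x\<in>V" "y\<in>V" "x\<noteq>y"
    have "{x,y} \<in> E \<longleftrightarrow> (\<forall>i<k. {x,y} \<in> Es i)" using I by auto
    also have "\<dots> \<longleftrightarrow> (\<forall>i<k. f x i + f y i \<ge> ereal 1)" using WS xy c by auto
    also have "\<dots> \<longleftrightarrow> trop_dot k (f x) (f y) \<ge> ereal 1" using trop_dot_ge[OF k] by auto
    finally show "{x,y} \<in> E \<longleftrightarrow> trop_dot k (f x) (f y) \<ge> ereal 1" .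
  qed (auto simp: f_def)
  then show ?thesis by blast
qed

theorem mainTheorem8:
  fixes V :: "'a set" and E :: "'a set set"
  assumes "simple_graph V E"
  shows "rho_T V E = threshold_intersection_number V E"
proof -
  have "(\<lambda>k. k \<ge> 1 \<and> (\<exists>f t. trop_rep k V E f t)) =
        (\<lambda>k. k \<ge> 1 \<and> (\<exists>Es :: nat \<Rightarrow> 'a set set. (\<forall>i<k. threshold_graph V (Es i)) \<and>
        (\<Inter>i<k. Es i) = E))"
    using dir1[OF assms] dir2[OF assms] by (intro ext) blast
  then show ?thesis unfolding rho_T_def threshold_intersection_number_def by simp
qed

end
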